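(* Let $f,g$ satisfy the standing assumptions below and suppose $\beta\ge\frac{2M_fQ_g}{\mu^3}$. Then for any $(x,y)\in\mathbb{R}^n\times\mathbb{R}^p$, $0\in\mathcal{D}_h(x,y)$ if and only if $0\in\hat{\mathcal{D}}_p(x,y)$.
   Context: Standing assumptions. (A1) Constants $M_f,\mu,L_g,Q_g>0$ exist such that: $f:\mathbb{R}^n\times\mathbb{R}^p\to\mathbb{R}$ is $M_f$-Lipschitz; $g$ is twice differentiable with $\nabla^2_{yy}g\succeq\mu I_p$; $\nabla g$ is $L_g$-Lipschitz; $\nabla^2_{yy}g,\nabla^2_{xy}g$ are $Q_g$-Lipschitz; $\nabla^2_{yy}g$ is continuously differentiable ($\nabla^2_{xy}g\in\mathbb{R}^{n\times p}$ has entries $\partial^2g/\partial x_i\partial y_j$). (A2) $f$ is a potential function of a conservative field $\mathcal{D}_f$ with compact convex values of norm at most $M_f$. Notation (all at $(x,y)$): $H=\nabla^2_{yy}g$; $\mathcal{A}(x,y):=y-H^{-1}\nabla_yg$; $\nabla^3_{xyy}g(x,y)[d]:=\lim_{t\to0}\frac1t(\nabla^2_{xy}g(x,y+td)-\nabla^2_{xy}g(x,y))$, $\nabla^3_{yyy}g(x,y)[d]:=\lim_{t\to0}\frac1t(\nabla^2_{yy}g(x,y+td)-\nabla^2_{yy}g(x,y))$; $J_{A,x}:=-\nabla^2_{xy}gH^{-1}+\nabla^3_{xyy}g[H^{-1}\nabla_yg]H^{-1}$, $J_{A,y}:=\nabla^3_{yyy}g[H^{-1}\nabla_yg]H^{-1}$;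 $\mathcal{D}_h(x,y):=\{(d_x+J_{A,x}d_y+\beta\nabla^2_{xy}g\nabla_yg,\ J_{A,y}d_y+\beta H\nabla_yg):(d_x,d_y)\in\mathcal{D}_f(x,\mathcal{A}(x,y))\}$; $W(x,y):=[I_n,\ -\nabla^2_{xy}g(x,y)H^{-1}]\in\mathbb{R}^{n\times(n+p)}$; $\hat{\mathcal{D}}_p(x,y):=\{W(x,y)^\top W(x,y)d+(0,\beta\nabla_yg(x,y)):d\in\mathcal{D}_f(x,\mathcal{A}(x,y))\}$. *)

theory Defs
  imports "HOL-Analysis.Analysis"
begin

definition abs_continuous_curve :: "(real \<Rightarrow> 'a::real_normed_vector) \<Rightarrow> bool" where
  "abs_continuous_curve \<gamma> \<longleftrightarrow>
     (\<forall>\<epsilon>>0. \<exists>\<delta>>0. \<forall>(n::nat) (s::nat \<Rightarrow> real) (t::nat \<Rightarrow> real).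
        (\<forall>i<n. 0 \<le> s i \<and> s i \<le> t i \<and> t i \<le> 1) \<and>
        (\<forall>i<n. \<forall>j<n. i \<noteq> j \<longrightarrow> t i \<le> s j \<or> t j \<le> s i) \<and>
        (\<Sum>i<n. t i - s i) < \<delta>
        \<longrightarrow> (\<Sum>i<n. norm (\<gamma> (t i) - \<gamma> (s i))) < \<epsilon>)"

definition cf_integral :: "('a::euclidean_space \<Rightarrow> 'a set) \<Rightarrow> (real \<Rightarrow> 'a) \<Rightarrow> real" where
  "cf_integral D \<gamma> = integral {0..1}
     (\<lambda>t. Sup ((\<lambda>v. inner (vector_derivative \<gamma> (at t)) v) ` D (\<gamma> t)))"

definition conservative_field :: "('a::euclidean_space \<Rightarrow> 'a set) \<Rightarrow> bool" where
  "conservative_field D \<longleftrightarrow>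
     closed {(z, v). v \<in> D z} \<and>
     (\<forall>z. D z \<noteq> {} \<and> compact (D z)) \<and>
     (\<forall>z. \<exists>r>0. bounded (\<Union> (D ` ball z r))) \<and>
     (\<forall>\<gamma>. abs_continuous_curve \<gamma> \<and> \<gamma> 0 = \<gamma> 1 \<longrightarrow> cf_integral D \<gamma> = 0)"

definition potential_of :: "('a::euclidean_space \<Rightarrow> real) \<Rightarrow> ('a \<Rightarrow> 'a set) \<Rightarrow> bool" where
  "potential_of f D \<longleftrightarrow>
     (\<forall>\<gamma>. abs_continuous_curve \<gamma> \<longrightarrow> f (\<gamma> 1) - f (\<gamma> 0) = cf_integral D \<gamma>)"

definition grad_x :: "((real^'n) \<times> (real^'p) \<Rightarrow> real) \<Rightarrow> (real^'n) \<times> (real^'p) \<Rightarrow> real^'n" where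
  "grad_x g z = (\<chi> i. frechet_derivative g (at z) (axis i 1, 0))"

definition grad_y :: "((real^'n) \<times> (real^'p) \<Rightarrow> real) \<Rightarrow> (real^'n) \<times> (real^'p) \<Rightarrow> real^'p" where
  "grad_y g z = (\<chi> j. frechet_derivative g (at z) (0, axis j 1))"

definition hess_yy :: "((real^'n) \<times> (real^'p) \<Rightarrow> real) \<Rightarrow> (real^'n) \<times> (real^'p) \<Rightarrow> real^'p^'p" where
  "hess_yy g z = (\<chi> i j. frechet_derivative (\<lambda>w. grad_y g w $ j) (at z) (0, axis i 1))"

definition hess_xy :: "((real^'n) \<times> (real^'p) \<Rightarrow> real) \<Rightarrow> (real^'n) \<times> (real^'p) \<Rightarrow> real^'p^'n" where
  "hess_xy g z = (\<chi> i j. frechet_derivative (\<lambda>w. grad_y g w $ j) (at z) (axis i 1, 0))"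

definition twice_differentiable :: "((real^'n) \<times> (real^'p) \<Rightarrow> real) \<Rightarrow> bool" where
  "twice_differentiable g \<longleftrightarrow>
     (\<forall>z. g differentiable (at z) \<and> (\<lambda>w. (grad_x g w, grad_y g w)) differentiable (at z))"

definition mat_norm :: "real^'m^'k \<Rightarrow> real" where
  "mat_norm M = onorm (\<lambda>v. M *v v)"

definition d3_xyy :: "((real^'n) \<times> (real^'p) \<Rightarrow> real) \<Rightarrow> real^'n \<Rightarrow> real^'p \<Rightarrow> real^'p \<Rightarrow> real^'p^'n" where
  "d3_xyy g x y d = Lim (at (0::real)) (\<lambda>t. (1/t) *\<^sub>R (hess_xy g (x, y + t *\<^sub>R d) - hess_xy g (x, y)))"

definition d3_yyy :: "((real^'n) \<times> (real^'p) \<Rightarrow> real) \<Rightarrow> real^'n \<Rightarrow> real^'p \<Rightarrow> real^'p \<Rightarrow> real^'p^'p" where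
  "d3_yyy g x y d = Lim (at (0::real)) (\<lambda>t. (1/t) *\<^sub>R (hess_yy g (x, y + t *\<^sub>R d) - hess_yy g (x, y)))"

definition A_map :: "((real^'n) \<times> (real^'p) \<Rightarrow> real) \<Rightarrow> real^'n \<Rightarrow> real^'p \<Rightarrow> real^'p" where
  "A_map g x y = y - matrix_inv (hess_yy g (x, y)) *v grad_y g (x, y)"

definition J_Ax :: "((real^'n) \<times> (real^'p) \<Rightarrow> real) \<Rightarrow> real^'n \<Rightarrow> real^'p \<Rightarrow> real^'p^'n" where
  "J_Ax g x y = (let Hi = matrix_inv (hess_yy g (x, y)) in
     - (hess_xy g (x, y) ** Hi) + d3_xyy g x y (Hi *v grad_y g (x, y)) ** Hi)"

definition J_Ay :: "((real^'n) \<times> (real^'p) \<Rightarrow> real) \<Rightarrow> real^'n \<Rightarrow> real^'p \<Rightarrow> real^'p^'p" where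
  "J_Ay g x y = (let Hi = matrix_inv (hess_yy g (x, y)) in
     d3_yyy g x y (Hi *v grad_y g (x, y)) ** Hi)"

definition D_h :: "((real^'n) \<times> (real^'p) \<Rightarrow> ((real^'n) \<times> (real^'p)) set) \<Rightarrow> ((real^'n) \<times> (real^'p) \<Rightarrow> real)
    \<Rightarrow> real \<Rightarrow> real^'n \<Rightarrow> real^'p \<Rightarrow> ((real^'n) \<times> (real^'p)) set" where
  "D_h Df g \<beta> x y =
     (\<lambda>(dx, dy). (dx + J_Ax g x y *v dy + \<beta> *\<^sub>R (hess_xy g (x, y) *v grad_y g (x, y)),
                  J_Ay g x y *v dy + \<beta> *\<^sub>R (hess_yy g (x, y) *v grad_y g (x, y))))
     ` Df (x, A_map g x y)"

text \<open>W(x,y) = [I_n, -hess_xy H^{-1}] as a linear map R^n x R^p -> R^n.\<close>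
definition W_map :: "((real^'n) \<times> (real^'p) \<Rightarrow> real) \<Rightarrow> real^'n \<Rightarrow> real^'p \<Rightarrow> (real^'n) \<times> (real^'p) \<Rightarrow> real^'n" where
  "W_map g x y d = fst d - (hess_xy g (x, y) ** matrix_inv (hess_yy g (x, y))) *v snd d"

definition D_p_hat :: "((real^'n) \<times> (real^'p) \<Rightarrow> ((real^'n) \<times> (real^'p)) set) \<Rightarrow> ((real^'n) \<times> (real^'p) \<Rightarrow> real)
    \<Rightarrow> real \<Rightarrow> real^'n \<Rightarrow> real^'p \<Rightarrow> ((real^'n) \<times> (real^'p)) set" where
  "D_p_hat Df g \<beta> x y =
     (\<lambda>d. adjoint (W_map g x y) (W_map g x y d) + (0, \<beta> *\<^sub>R grad_y g (x, y)))
     ` Df (x, A_map g x y)"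

end

theory Submission
  imports Defs
begin


lemma my_matrix_inv:
  assumes "invertible (A::real^'n^'n)"
  shows "A ** matrix_inv A = mat 1" "matrix_inv A ** A = mat 1"
proof -
  have "\<exists>A'. A ** A' = mat 1 \<and> A' ** A = mat 1" using assms unfolding invertible_def by blast
  from someI_ex[OF this] show "A ** matrix_inv A = mat 1" "matrix_inv A ** A = mat 1"
    unfolding matrix_inv_def by auto
qed

lemma quot_lim:
  fixes f :: "real \<Rightarrow> 'a::real_normed_vector"
  assumes "(f has_vector_derivative L) (at 0)"
  shows "((\<lambda>t. (1/t) *\<^sub>R (f t - f 0)) \<longlongrightarrow> L) (at 0)"
proof -
  from assms have 1: "((\<lambda>h. norm (f (0 + h) - f 0 - h *\<^sub>R L) / norm h) \<longlongrightarrow> 0) (at 0)"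
    unfolding has_vector_derivative_def has_derivative_at by simp
  have eq: "norm (f (0+h) - f 0 - h *\<^sub>R L) / norm h = norm ((1/h) *\<^sub>R (f h - f 0) - L)" if "h \<noteq> 0" for h
  proof -
    have "(1/h) *\<^sub>R (f h - f 0) - L = (1/h) *\<^sub>R (f h - f 0 - h *\<^sub>R L)"
      using that by (simp add: scaleR_diff_right)
    then show ?thesis using that by (simp add: divide_inverse mult.commute)
  qed
  have "((\<lambda>h. norm ((1/h) *\<^sub>R (f h - f 0) - L)) \<longlongrightarrow> 0) (at 0)"
    apply (rule Lim_transform_eventually[OF 1])
    using eq by (auto simp: eventually_at intro!: exI[of _ 1])
  then show ?thesis
    by (simp add: tendsto_norm_zero_iff LIM_zero_iff)
qed

lemma bl_mat_apply: "bounded_linear (\<lambda>M::real^'n^'m. M *v b)"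
proof -
  have "linear (\<lambda>M::real^'n^'m. M *v b)"
    by (rule linearI) (simp_all add: matrix_vector_mult_add_rdistrib scaleR_matrix_vector_assoc)
  then show ?thesis by (simp add: linear_conv_bounded_linear)
qed

lemma mvneg: "(- (A::real^'n^'m)) *v v = - (A *v v)"
  by (simp add: vec_eq_iff matrix_vector_mult_def sum_negf)

theorem proposition4p7:
  fixes f g :: "(real^'n) \<times> (real^'p) \<Rightarrow> real"
    and Df :: "(real^'n) \<times> (real^'p) \<Rightarrow> ((real^'n) \<times> (real^'p)) set"
    and M\<^sub>f \<mu> L\<^sub>g Q\<^sub>g \<beta> :: real
    and x :: "real^'n" and y :: "real^'p"
  assumes pos: "M\<^sub>f > 0" "\<mu> > 0" "L\<^sub>g > 0" "Q\<^sub>g > 0"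
    and f_lip: "M\<^sub>f-lipschitz_on UNIV f"
    and g_C2: "twice_differentiable g"
    and H_pd: "\<And>z v. v \<bullet> (hess_yy g z *v v) \<ge> \<mu> * (norm v)\<^sup>2"
    and grad_lip: "L\<^sub>g-lipschitz_on UNIV (\<lambda>z. (grad_x g z, grad_y g z))"
    and Hyy_lip: "\<And>z w. mat_norm (hess_yy g z - hess_yy g w) \<le> Q\<^sub>g * dist z w"
    and Hxy_lip: "\<And>z w. mat_norm (hess_xy g z - hess_xy g w) \<le> Q\<^sub>g * dist z w"
    and Hyy_C1: "\<exists>D. (\<forall>z. (hess_yy g has_derivative blinfun_apply (D z)) (at z)) \<and> continuous_on UNIV D"
    and Df_cons: "conservative_field Df" and f_pot: "potential_of f Df"
    and Df_vals: "\<And>z. compact (Df z) \<and> convex (Df z) \<and> (\<forall>v\<in>Df z. norm v \<le> M\<^sub>f)"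
    and beta: "\<beta> \<ge> 2 * M\<^sub>f * Q\<^sub>g / \<mu> ^ 3"
  shows "0 \<in> D_h Df g \<beta> x y \<longleftrightarrow> 0 \<in> D_p_hat Df g \<beta> x y"
proof -
  define H where "H = hess_yy g (x, y)"
  define Hi where "Hi = matrix_inv H"
  define gy where "gy = grad_y g (x, y)"
  define Hxy where "Hxy = hess_xy g (x, y)"
  define v where "v = Hi *v gy"
  have invH: "invertible H"
  proof -
    have "\<forall>u. H *v u = 0 \<longrightarrow> u = 0"
    proof (intro allI impI)
      fix u assume "H *v u = 0"
      then have "\<mu> * (norm u)\<^sup>2 \<le> 0" using H_pd[of u "(x,y)"] by (simp add: H_def)
      then show "u = 0" using pos(2)
        by (metis mult_pos_pos not_le norm_eq_zero zero_less_norm_iff zero_less_power)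
    qed
    then show ?thesis using matrix_left_invertible_ker invertible_left_inverse by blast
  qed
  have HHi: "H ** Hi = mat 1" and HiH: "Hi ** H = mat 1"
    using my_matrix_inv[OF invH] by (simp_all add: Hi_def)
  have Hi_bound: "norm (Hi *v w) \<le> norm w / \<mu>" for w
  proof -
    define u where "u = Hi *v w"
    have Hu: "H *v u = w" by (simp add: u_def matrix_vector_mul_assoc HHi)
    have "\<mu> * (norm u)\<^sup>2 \<le> u \<bullet> w" using H_pd[of u "(x,y)"] Hu by (simp add: H_def)
    also have "\<dots> \<le> norm u * norm w" by (rule norm_cauchy_schwarz)
    finally have "\<mu> * (norm u)\<^sup>2 \<le> norm u * norm w" .
    then have "\<mu> * norm u \<le> norm w"
      by (cases "norm u = 0") (auto simp: power2_eq_square)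
    then show ?thesis using pos(2) by (simp add: u_def field_simps)
  qed
  have d3_0: "d3_yyy g x y 0 = 0" "d3_xyy g x y 0 = 0"
    unfolding d3_yyy_def d3_xyy_def by (simp_all add: tendsto_Lim)
  have Jx0: "gy = 0 \<Longrightarrow> J_Ax g x y = - (Hxy ** Hi)"
    by (simp add: J_Ax_def Let_def d3_0 Hi_def H_def gy_def Hxy_def)
  have Jy0: "gy = 0 \<Longrightarrow> J_Ay g x y = 0"
    by (simp add: J_Ay_def Let_def d3_0 Hi_def H_def gy_def)
  define W where "W = W_map g x y"
  have linW: "linear W"
    unfolding W_def W_map_def
    by (rule linearI) (simp_all add: matrix_vector_right_distrib scaleR_right_diff_distrib
        matrix_vector_mult_scaleR)
  have fstadj: "fst (adjoint W u) = u" for u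
  proof -
    have "a \<bullet> fst (adjoint W u) = a \<bullet> u" for a
    proof -
      have "(a, 0) \<bullet> adjoint W u = W (a, 0) \<bullet> u" by (rule adjoint_works[OF linW])
      moreover have "(a, 0) \<bullet> adjoint W u = a \<bullet> fst (adjoint W u)"
        by (cases "adjoint W u") (simp add: inner_Pair)
      moreover have "W (a, 0) = a" by (simp add: W_def W_map_def)
      ultimately show ?thesis by simp
    qed
    then have "(fst (adjoint W u) - u) \<bullet> (fst (adjoint W u) - u) = 0"
      by (simp add: inner_diff_left inner_diff_right inner_commute)
    then show ?thesis by simp
  qed
  have adj0: "adjoint W 0 = 0"
    using linear_0[OF adjoint_linear[OF linW]] .
  have bpos: "\<beta> > 0"
  proof -
    have "2 * M\<^sub>f * Q\<^sub>g / \<mu> ^ 3 > 0" using pos by simp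
    then show ?thesis using beta by linarith
  qed
  have Wd: "W (dx, dy) = dx - (Hxy ** Hi) *v dy" for dx dy
    by (simp add: W_def W_map_def Hxy_def Hi_def H_def)
  have Tbound: "\<bar>a \<bullet> (d3_yyy g x y v *v b)\<bar> \<le> norm a * (Q\<^sub>g * norm v) * norm b" for a b
  proof -
    obtain D where D: "\<And>z. (hess_yy g has_derivative blinfun_apply (D z)) (at z)"
      using Hyy_C1 by blast
    define L where "L = blinfun_apply (D (x, y)) (0, v)"
    define \<gamma> where "\<gamma> = (\<lambda>t::real. (x, y + t *\<^sub>R v))"
    have g1: "(\<gamma> has_derivative (\<lambda>t. (0, t *\<^sub>R v))) (at 0)"
      unfolding \<gamma>_def by (auto intro!: derivative_eq_intros)
    have g2: "(hess_yy g has_derivative blinfun_apply (D (x, y))) (at (\<gamma> 0))"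
      using D by (simp add: \<gamma>_def)
    have "((hess_yy g \<circ> \<gamma>) has_derivative (blinfun_apply (D (x, y)) \<circ> (\<lambda>t. (0, t *\<^sub>R v)))) (at 0)"
      by (rule diff_chain_at[OF g1 g2])
    moreover have "(blinfun_apply (D (x, y)) \<circ> (\<lambda>t. (0, t *\<^sub>R v))) = (\<lambda>t. t *\<^sub>R L)"
    proof
      fix t :: real
      show "(blinfun_apply (D (x, y)) \<circ> (\<lambda>t. (0, t *\<^sub>R v))) t = t *\<^sub>R L"
        using blinfun.scaleR_right[of "D (x,y)" t "(0,v)"] by (simp add: L_def)
    qed
    ultimately have "((hess_yy g \<circ> \<gamma>) has_vector_derivative L) (at 0)"
      by (simp add: has_vector_derivative_def)
    from quot_lim[OF this]
    have lim: "((\<lambda>t. (1/t) *\<^sub>R (hess_yy g (x, y + t *\<^sub>R v) - hess_yy g (x, y))) \<longlongrightarrow> L) (at 0)"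
      by (simp add: \<gamma>_def)
    then have T: "d3_yyy g x y v = L"
      unfolding d3_yyy_def by (simp add: tendsto_Lim)
    have lim2: "((\<lambda>t. a \<bullet> (((1/t) *\<^sub>R (hess_yy g (x, y + t *\<^sub>R v) - hess_yy g (x, y))) *v b))
       \<longlongrightarrow> a \<bullet> (L *v b)) (at 0)"
      by (intro tendsto_intros bounded_linear.tendsto[OF bl_mat_apply] lim)
    have ev: "eventually (\<lambda>t. norm (a \<bullet> (((1/t) *\<^sub>R (hess_yy g (x, y + t *\<^sub>R v) - hess_yy g (x, y))) *v b))
       \<le> norm a * (Q\<^sub>g * norm v) * norm b) (at 0)"
      using eventually_neq_at_within[of "0::real" 0 UNIV]
    proof (rule eventually_mono)
      fix t :: real assume t0: "t \<noteq> 0"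
      define M where "M = hess_yy g (x, y + t *\<^sub>R v) - hess_yy g (x, y)"
      have s1: "norm (a \<bullet> (((1/t) *\<^sub>R M) *v b)) \<le> norm a * norm (((1/t) *\<^sub>R M) *v b)"
        by (simp add: Cauchy_Schwarz_ineq2)
      have s2: "norm (((1/t) *\<^sub>R M) *v b) = norm (M *v b) / \<bar>t\<bar>"
        by (simp add: scaleR_matrix_vector_assoc[symmetric])
      have s3: "norm (M *v b) \<le> mat_norm M * norm b"
        unfolding mat_norm_def by (rule onorm) simp
      have s4: "mat_norm M \<le> Q\<^sub>g * (\<bar>t\<bar> * norm v)"
        using Hyy_lip[of "(x, y + t *\<^sub>R v)" "(x, y)"]
        by (simp add: M_def dist_Pair_Pair dist_norm)
      have "norm (M *v b) \<le> Q\<^sub>g * (\<bar>t\<bar> * norm v) * norm b"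
        using s3 s4 by (meson mult_right_mono norm_ge_zero order_trans)
      then have "norm (M *v b) / \<bar>t\<bar> \<le> Q\<^sub>g * norm v * norm b"
        using t0 by (simp add: field_simps)
      then have "norm a * (norm (M *v b) / \<bar>t\<bar>) \<le> norm a * (Q\<^sub>g * norm v * norm b)"
        by (rule mult_left_mono) simp_all
      then have "norm (a \<bullet> (((1/t) *\<^sub>R M) *v b)) \<le> norm a * (Q\<^sub>g * norm v) * norm b"
        using s1 s2 by (simp add: mult.assoc)
      then show "norm (a \<bullet> (((1/t) *\<^sub>R (hess_yy g (x, y + t *\<^sub>R v) - hess_yy g (x, y))) *v b))
       \<le> norm a * (Q\<^sub>g * norm v) * norm b" by (simp add: M_def)
    qed
    have "norm (a \<bullet> (L *v b)) \<le> norm a * (Q\<^sub>g * norm v) * norm b"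
      by (rule Lim_norm_ubound[OF _ lim2 ev]) simp
    then show ?thesis using T by simp
  qed
  show ?thesis
  proof
    assume "0 \<in> D_h Df g \<beta> x y"
    then obtain dx dy where dd: "(dx, dy) \<in> Df (x, A_map g x y)"
      and e1: "dx + J_Ax g x y *v dy + \<beta> *\<^sub>R (Hxy *v gy) = 0"
      and e2: "J_Ay g x y *v dy + \<beta> *\<^sub>R (H *v gy) = 0"
      unfolding D_h_def by (auto simp: Hxy_def gy_def H_def zero_prod_def)
    have dyM: "norm dy \<le> M\<^sub>f"
    proof -
      have "norm (dx, dy) \<le> M\<^sub>f" using Df_vals[of "(x, A_map g x y)"] dd by blast
      then show ?thesis using norm_snd_le[of dy dx] by linarith
    qed
    have gy0: "gy = 0"
    proof (rule ccontr)
      assume ne: "gy \<noteq> 0"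
      define w where "w = Hi *v dy"
      have "J_Ay g x y *v dy = d3_yyy g x y v *v w"
        by (simp add: J_Ay_def Let_def v_def w_def Hi_def H_def gy_def matrix_vector_mul_assoc)
      with e2 have "d3_yyy g x y v *v w = - (\<beta> *\<^sub>R (H *v gy))"
        by (simp add: eq_neg_iff_add_eq_0)
      then have "gy \<bullet> (d3_yyy g x y v *v w) = - \<beta> * (gy \<bullet> (H *v gy))"
        by simp
      then have "\<beta> * (gy \<bullet> (H *v gy)) \<le> norm gy * (Q\<^sub>g * norm v) * norm w"
        using Tbound[of gy w] by linarith
      moreover have "\<mu> * (norm gy)\<^sup>2 \<le> gy \<bullet> (H *v gy)" using H_pd by (simp add: H_def)
      ultimately have A: "\<beta> * (\<mu> * (norm gy)\<^sup>2) \<le> norm gy * (Q\<^sub>g * norm v) * norm w"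
      proof -
        have "\<beta> * (\<mu> * (norm gy)\<^sup>2) \<le> \<beta> * (gy \<bullet> (H *v gy))"
          by (rule mult_left_mono) (use bpos \<open>\<mu> * (norm gy)\<^sup>2 \<le> gy \<bullet> (H *v gy)\<close> in auto)
        then show ?thesis using \<open>\<beta> * (gy \<bullet> (H *v gy)) \<le> norm gy * (Q\<^sub>g * norm v) * norm w\<close> by linarith
      qed
      have vb: "norm v \<le> norm gy / \<mu>" unfolding v_def by (rule Hi_bound)
      have wb: "norm w \<le> M\<^sub>f / \<mu>" unfolding w_def
      proof -
        have "norm dy / \<mu> \<le> M\<^sub>f / \<mu>" using dyM pos(2) by (simp add: divide_right_mono)
        then show "norm (Hi *v dy) \<le> M\<^sub>f / \<mu>" using Hi_bound[of dy] by linarith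
      qed
      have "norm gy * (Q\<^sub>g * norm v) * norm w \<le> norm gy * (Q\<^sub>g * (norm gy / \<mu>)) * (M\<^sub>f / \<mu>)"
        using vb wb pos by (intro mult_mono mult_left_mono) auto
      with A have B: "\<beta> * (\<mu> * (norm gy)\<^sup>2) \<le> norm gy * (Q\<^sub>g * (norm gy / \<mu>)) * (M\<^sub>f / \<mu>)"
        by linarith
      have C: "\<beta> * \<mu> ^ 3 \<ge> 2 * M\<^sub>f * Q\<^sub>g" using beta pos(2) by (simp add: field_simps)
      have np: "(norm gy)\<^sup>2 > 0" using ne by simp
      have rhs: "norm gy * (Q\<^sub>g * (norm gy / \<mu>)) * (M\<^sub>f / \<mu>) = (M\<^sub>f * Q\<^sub>g * (norm gy)\<^sup>2) / \<mu>\<^sup>2"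
        by (simp add: power2_eq_square)
      have lhs: "\<beta> * (\<mu> * (norm gy)\<^sup>2) * \<mu>\<^sup>2 = \<beta> * \<mu> ^ 3 * (norm gy)\<^sup>2"
        by (simp add: power2_eq_square power3_eq_cube)
      have "\<beta> * (\<mu> * (norm gy)\<^sup>2) * \<mu>\<^sup>2 \<le> M\<^sub>f * Q\<^sub>g * (norm gy)\<^sup>2"
        using B unfolding rhs using pos(2) by (simp add: pos_le_divide_eq)
      then have "\<beta> * \<mu> ^ 3 * (norm gy)\<^sup>2 \<le> M\<^sub>f * Q\<^sub>g * (norm gy)\<^sup>2"
        unfolding lhs .
      moreover have "2 * M\<^sub>f * Q\<^sub>g * (norm gy)\<^sup>2 \<le> \<beta> * \<mu> ^ 3 * (norm gy)\<^sup>2"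
        using C np by (intro mult_right_mono) auto
      moreover have "2 * M\<^sub>f * Q\<^sub>g * (norm gy)\<^sup>2 = 2 * (M\<^sub>f * Q\<^sub>g * (norm gy)\<^sup>2)" by simp
      ultimately have "M\<^sub>f * Q\<^sub>g * (norm gy)\<^sup>2 \<le> 0" by linarith
      moreover have "M\<^sub>f * Q\<^sub>g * (norm gy)\<^sup>2 > 0" using pos np by simp
      ultimately show False by linarith
    qed
    have "W (dx, dy) = 0"
      using e1 Jx0[OF gy0] gy0 by (simp add: Wd mvneg)
    then have "adjoint W (W (dx, dy)) + (0, \<beta> *\<^sub>R gy) = 0"
      using adj0 gy0 by (simp add: zero_prod_def)
    show "0 \<in> D_p_hat Df g \<beta> x y"
      unfolding D_p_hat_def
    proof (rule image_eqI[where x="(dx, dy)"])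
      show "0 = adjoint (W_map g x y) (W_map g x y (dx, dy)) + (0, \<beta> *\<^sub>R grad_y g (x, y))"
        using \<open>adjoint W (W (dx, dy)) + (0, \<beta> *\<^sub>R gy) = 0\<close> by (simp add: W_def gy_def)
    qed (rule dd)
  next
    assume "0 \<in> D_p_hat Df g \<beta> x y"
    then obtain d where dd: "d \<in> Df (x, A_map g x y)"
      and e: "adjoint W (W d) + (0, \<beta> *\<^sub>R gy) = 0"
      unfolding D_p_hat_def by (auto simp: W_def gy_def)
    obtain dx dy where dsplit: "d = (dx, dy)" by (cases d)
    have "fst (adjoint W (W d) + (0, \<beta> *\<^sub>R gy)) = 0" using e by simp
    then have Wd0: "W d = 0" by (simp add: fstadj)
    with e adj0 have "\<beta> *\<^sub>R gy = 0" by (simp add: zero_prod_def)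
    then have gy0: "gy = 0" using bpos by simp
    have "dx - (Hxy ** Hi) *v dy = 0" using Wd0 dsplit Wd by simp
    then have "(dx + J_Ax g x y *v dy + \<beta> *\<^sub>R (Hxy *v gy),
                J_Ay g x y *v dy + \<beta> *\<^sub>R (H *v gy)) = 0"
      using Jx0[OF gy0] Jy0[OF gy0] gy0 by (simp add: mvneg zero_prod_def)
    show "0 \<in> D_h Df g \<beta> x y"
      unfolding D_h_def
    proof (rule image_eqI[where x="(dx, dy)"])
      show "(dx, dy) \<in> Df (x, A_map g x y)" using dd dsplit by simp
    qed (use \<open>(dx + J_Ax g x y *v dy + \<beta> *\<^sub>R (Hxy *v gy), J_Ay g x y *v dy + \<beta> *\<^sub>R (H *v gy)) = 0\<close> in \<open>simp add: Hxy_def gy_def H_def\<close>)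
  qed
qed

end
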